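(* Let $n$ be an integer and let $G_{n}=\langle s,t\mid swt^{-1}w^{-1}=1\rangle$ with $w=(ts^{-1}tst^{-1}s)^n$ (this is the fundamental group of the exterior of the two-bridge knot with Conway's notation $C(2n,3)$). For $M\in\mathbb{C}\setminus\{0\}$ and $x\in\mathbb{C}$ define \[ \rho(s)=\begin{pmatrix} M & 1\\ 0 & M^{-1}\end{pmatrix},\qquad \rho(t)=\begin{pmatrix} M & 0\\ 2-M^{2}-M^{-2}-x & M^{-1}\end{pmatrix}. \] Then $\rho$ defines a representation $G_n\to \mathrm{SL}(2,\mathbb{C})$ if and only if $x$ is a root of the Riley–Mednykh polynomial $P_{2n}=P_{2n}(x,M)$ given explicitly by \[ P_{2n}=\sum_{i=0}^{2n}\binom{n+\lfloor i/2\rfloor}{i}M^{4n}\left(M^{2}+M^{-2}+x-1\right)^{i}(-x)^{\lfloor (1+i)/2\rfloor}\quad\text{if } n\ge 0, \] \[ P_{2n}=\sum_{i=0}^{-2n-1}\binom{-n+\lfloor (i-1)/2\rfloor}{i}M^{-4n-2}\left(-M^{2}-M^{-2}-x+1\right)^{i}(-x)^{\lfloor (1+i)/2\rfloor}\quad\text{if } n<0. \]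
   Context: $\binom{a}{b}$ denotes the usual binomial coefficient and $\lfloor\cdot\rfloor$ the floor function. "$\rho$ defines a representation" means that the assignment on the generators $s,t$ respects the relation $swt^{-1}w^{-1}=1$. *)

theory Defs
  imports "HOL-Analysis.Analysis"
begin

type_synonym cmat = "complex^2^2"

text \<open>Integer powers of a 2x2 complex matrix (negative exponents via the matrix inverse).\<close>
definition mpow_int :: "cmat \<Rightarrow> int \<Rightarrow> cmat" where
  "mpow_int A k = (if 0 \<le> k then ((\<lambda>B. A ** B) ^^ nat k) (mat 1)
                   else ((\<lambda>B. matrix_inv A ** B) ^^ nat (- k)) (mat 1))"

definition rho_s :: "complex \<Rightarrow> cmat" where
  "rho_s M = vector [vector [M, 1], vector [0, inverse M]]"

definition rho_t :: "complex \<Rightarrow> complex \<Rightarrow> cmat" where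
  "rho_t M x = vector [vector [M, 0], vector [2 - M^2 - inverse (M^2) - x, inverse M]]"

text \<open>The word w = (t s^-1 t s t^-1 s)^n evaluated at matrices S, T.\<close>
definition word_w :: "int \<Rightarrow> cmat \<Rightarrow> cmat \<Rightarrow> cmat" where
  "word_w n S T = mpow_int (T ** matrix_inv S ** T ** S ** matrix_inv T ** S) n"

text \<open>The assignment s \<mapsto> S, t \<mapsto> T respects the relation s w t^-1 w^-1 = 1.\<close>
definition defines_rep :: "int \<Rightarrow> cmat \<Rightarrow> cmat \<Rightarrow> bool" where
  "defines_rep n S T \<longleftrightarrow>
     S ** word_w n S T ** matrix_inv T ** matrix_inv (word_w n S T) = mat 1"

text \<open>Riley--Mednykh polynomial P_{2n}(x,M).\<close>
definition riley_mednykh :: "int \<Rightarrow> complex \<Rightarrow> complex \<Rightarrow> complex" where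
  "riley_mednykh n x M =
    (if 0 \<le> n then
       (\<Sum>i = 0..nat (2*n). of_nat (nat (n + int (i div 2)) choose i) * M^(nat (4*n))
          * (M^2 + inverse (M^2) + x - 1)^i * (- x)^((1 + i) div 2))
     else
       (\<Sum>i = 0..nat (-2*n - 1). of_nat (nat (- n + (int i - 1) div 2) choose i)
          * M^(nat (-4*n - 2))
          * (- (M^2) - inverse (M^2) - x + 1)^i * (- x)^((1 + i) div 2)))"

end

theory Submission imports Defs begin
definition mk :: "complex \<Rightarrow> complex \<Rightarrow> complex \<Rightarrow> complex \<Rightarrow> cmat" where
  "mk a b c d = vector [vector [a, b], vector [c, d]]"

lemma mk_nth: "mk a b c d $ 1 $ 1 = a" "mk a b c d $ 1 $ 2 = b" "mk a b c d $ 2 $ 1 = c" "mk a b c d $ 2 $ 2 = d"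
  by (simp_all add: mk_def)

lemma mk_eq: "mk a b c d = mk a' b' c' d' \<longleftrightarrow> a = a' \<and> b = b' \<and> c = c' \<and> d = d'"
  by (metis mk_nth)

lemma mk_all: "(A::cmat) = mk (A$1$1) (A$1$2) (A$2$1) (A$2$2)"
  by (simp add: vec_eq_iff forall_2 mk_nth)

lemma mk_mult: "mk a b c d ** mk e f g h = mk (a*e+b*g) (a*f+b*h) (c*e+d*g) (c*f+d*h)"
  by (simp add: vec_eq_iff forall_2 mk_nth matrix_matrix_mult_def sum_2)

lemma mat1_mk: "(mat 1 :: cmat) = mk 1 0 0 1"
  by (simp add: vec_eq_iff forall_2 mk_nth mat_def)

lemma matrix_inv_eq: fixes A B :: cmat assumes "A ** B = mat 1" "B ** A = mat 1" shows "matrix_inv A = B"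
proof -
  have ex: "\<exists>A'. A ** A' = mat 1 \<and> A' ** A = mat 1" using assms by blast
  let ?C = "matrix_inv A"
  have C: "A ** ?C = mat 1 \<and> ?C ** A = mat 1" unfolding matrix_inv_def by (rule someI_ex[OF ex])
  have "?C = ?C ** (A ** B)" using assms by simp
  also have "\<dots> = B" using C by (simp add: matrix_mul_assoc)
  finally show ?thesis .
qed

lemma invertible_inv: fixes A :: cmat assumes "invertible A"
  shows "A ** matrix_inv A = mat 1" "matrix_inv A ** A = mat 1"
proof -
  have ex: "\<exists>A'. A ** A' = mat 1 \<and> A' ** A = mat 1" using assms unfolding invertible_def by blast
  show "A ** matrix_inv A = mat 1" "matrix_inv A ** A = mat 1" unfolding matrix_inv_def using someI_ex[OF ex] by auto
qed

lemma mk_inv: assumes "a*d - b*c = 1" shows "matrix_inv (mk a b c d) = mk d (-b) (-c) a"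
  "invertible (mk a b c d)"
proof -
  have 1: "mk a b c d ** mk d (-b) (-c) a = mat 1" "mk d (-b) (-c) a ** mk a b c d = mat 1"
    using assms by (auto simp: mk_mult mat1_mk mk_eq algebra_simps)
  show "matrix_inv (mk a b c d) = mk d (-b) (-c) a" by (rule matrix_inv_eq[OF 1])
  show "invertible (mk a b c d)" using 1 unfolding invertible_def by blast
qed

definition Dsq :: "complex \<Rightarrow> nat \<Rightarrow> complex" where
  "Dsq v k = (\<Sum>j\<le>k. of_nat ((k+j) choose (2*j+1)) * v^j)"
definition Esq :: "complex \<Rightarrow> nat \<Rightarrow> complex" where
  "Esq v k = (\<Sum>j\<le>k. of_nat ((k+j) choose (2*j)) * v^j)"

lemma Dsq_range: assumes "k \<le> Suc N" shows "Dsq v k = (\<Sum>j\<le>N. of_nat ((k+j) choose (2*j+1)) * v^j)"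
proof (cases "k \<le> N")
  case True
  show ?thesis unfolding Dsq_def
    by (rule sum.mono_neutral_left) (use True in auto)
next
  case False
  then have k: "k = Suc N" using assms by auto
  show ?thesis unfolding Dsq_def k by (simp add: binomial_eq_0)
qed

lemma Esq_range: assumes "k \<le> N" shows "Esq v k = (\<Sum>j\<le>N. of_nat ((k+j) choose (2*j)) * v^j)"
  unfolding Esq_def
  by (rule sum.mono_neutral_left) (use assms in \<open>auto simp: binomial_eq_0\<close>)

lemma DE1: "Dsq v (Suc k) = Dsq v k + Esq v k"
proof -
  have "Dsq v (Suc k) = (\<Sum>j\<le>Suc k. of_nat ((Suc k+j) choose (2*j+1)) * v^j)" by (rule Dsq_range) auto
  also have "\<dots> = (\<Sum>j\<le>Suc k. of_nat ((k+j) choose (2*j+1)) * v^j + of_nat ((k+j) choose (2*j)) * v^j)"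
    by (rule sum.cong) (auto simp: algebra_simps)
  also have "\<dots> = Dsq v k + Esq v k"
    by (simp add: sum.distrib Dsq_range[of k "Suc k"] Esq_range[of k "Suc k"] binomial_eq_0)
  finally show ?thesis .
qed

lemma DE2: "Esq v (Suc k) = Esq v k + v * Dsq v (Suc k)"
proof -
  have "Esq v (Suc k) - Esq v k = (\<Sum>j\<le>Suc k. of_nat ((Suc k+j) choose (2*j)) * v^j - of_nat ((k+j) choose (2*j)) * v^j)"
    unfolding sum_subtractf Esq_range[of k "Suc k", OF le_SucI[OF order.refl]] Esq_def[of v "Suc k"] by simp
  also have "\<dots> = (\<Sum>i\<le>k. of_nat ((Suc k+Suc i) choose (2*Suc i)) * v^Suc i - of_nat ((k+Suc i) choose (2*Suc i)) * v^Suc i)"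
    by (subst sum.atMost_Suc_shift) simp
  also have "\<dots> = (\<Sum>i\<le>k. v * (of_nat ((Suc k+i) choose (2*i+1)) * v^i))"
  proof (rule sum.cong)
    fix i assume "i \<in> {..k}"
    have "(Suc k+Suc i) choose (2*Suc i) = ((k+Suc i) choose (2*i+1)) + ((k+Suc i) choose (2*Suc i))"
      by (metis add_Suc_right add_Suc_shift binomial_Suc_Suc mult_Suc_right Suc_eq_plus1 add_2_eq_Suc)
    then show "of_nat ((Suc k+Suc i) choose (2*Suc i)) * v^Suc i - of_nat ((k+Suc i) choose (2*Suc i)) * v^Suc i
       = v * (of_nat ((Suc k+i) choose (2*i+1)) * v^i)"
      by (simp add: algebra_simps)
  qed simp
  also have "\<dots> = v * Dsq v (Suc k)"
    by (simp add: sum_distrib_left Dsq_range[of "Suc k" k])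
  finally show ?thesis by (simp add: algebra_simps)
qed

lemma Dsq_0: "Dsq v 0 = 0" by (simp add: Dsq_def)
lemma Dsq_1: "Dsq v 1 = 1" by (simp add: Dsq_def binomial_eq_0)
lemma Esq_Dsq: "Esq v k = Dsq v (Suc k) - Dsq v k" using DE1[of v k] by simp

lemma Dsq_rec: "Dsq v (Suc (Suc k)) = (2+v) * Dsq v (Suc k) - Dsq v k"
  using DE1[of v "Suc k"] DE2[of v k] Esq_Dsq[of v k] by (simp add: algebra_simps)

lemma pow_mk:
  assumes det: "a*d - b*c = 1" and s0: "s 0 = 0" and s1: "s (Suc 0) = 1"
    and srec: "\<And>k. s (Suc (Suc k)) = (a+d) * s (Suc k) - s k"
  shows "((\<lambda>B. mk a b c d ** B) ^^ k) (mat 1) =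
    mk (s k * a - (if k = 0 then -1 else s (k-1))) (s k * b) (s k * c) (s k * d - (if k = 0 then -1 else s (k-1)))"
proof (induction k)
  case 0
  then show ?case by (simp add: s0 mat1_mk)
next
  case (Suc k)
  define t where "t = (if k = 0 then -1 else s (k-1))"
  have step: "s (Suc k) = (a+d) * s k - t"
    unfolding t_def using s0 s1 srec[of "k-1"] by (cases k) auto
  have IH: "((\<lambda>B. mk a b c d ** B) ^^ k) (mat 1) = mk (s k * a - t) (s k * b) (s k * c) (s k * d - t)"
    using Suc.IH unfolding t_def .
  have e: "a * (s k * a - t) + b * (s k * c) = ((a + d) * s k - t) * a - s k"
     "a * (s k * b) + b * (s k * d - t) = ((a + d) * s k - t) * b"
     "c * (s k * a - t) + d * (s k * c) = ((a + d) * s k - t) * c"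
     "c * (s k * b) + d * (s k * d - t) = ((a + d) * s k - t) * d - s k"
    using det by algebra+
  show ?case
    unfolding funpow.simps o_apply IH mk_mult mk_eq step using e by simp
qed

lemma invertible_pow: fixes B :: cmat assumes "invertible B"
  shows "invertible (((\<lambda>X. B ** X) ^^ k) (mat 1))"
proof (induction k)
  case 0
  have "(mat 1::cmat) ** mat 1 = mat 1" by simp
  then show ?case unfolding invertible_def by auto
next
  case (Suc k)
  then show ?case using invertible_mult[OF assms] by simp
qed

lemma rel_iff: fixes S T W :: cmat assumes "invertible W" "invertible T"
  shows "S ** W ** matrix_inv T ** matrix_inv W = mat 1 \<longleftrightarrow> S ** W = W ** T"
proof -
  have W: "W ** matrix_inv W = mat 1" "matrix_inv W ** W = mat 1" using invertible_inv[OF assms(1)] by auto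
  have T: "T ** matrix_inv T = mat 1" "matrix_inv T ** T = mat 1" using invertible_inv[OF assms(2)] by auto
  have 1: "X ** matrix_inv W = mat 1 \<longleftrightarrow> X = W" for X
  proof
    assume "X ** matrix_inv W = mat 1"
    then have "X ** matrix_inv W ** W = W" by simp
    then show "X = W" by (simp add: W matrix_mul_assoc[symmetric])
  qed (simp add: W)
  have 2: "Y ** matrix_inv T = W \<longleftrightarrow> Y = W ** T" for Y
  proof
    assume "Y ** matrix_inv T = W"
    then have "Y ** matrix_inv T ** T = W ** T" by simp
    then show "Y = W ** T" by (simp add: T matrix_mul_assoc[symmetric])
  qed (simp add: T matrix_mul_assoc[symmetric])
  show ?thesis using 1 2 by simp
qed

lemma key: assumes "M \<noteq> 0" "r = c*q"
  shows "mk M 1 0 (inverse M) ** mk p q r s = mk p q r s ** mk M 0 c (inverse M) \<longleftrightarrow> M*q + s - inverse M * q = 0"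
proof -
  have "mk M 1 0 (inverse M) ** mk p q r s = mk p q r s ** mk M 0 c (inverse M) \<longleftrightarrow>
     (M*q + s = q * inverse M \<and> inverse M * r = r * M + s * c)"
    unfolding mk_mult mk_eq using assms by (auto simp: algebra_simps)
  also have "\<dots> \<longleftrightarrow> M*q + s - inverse M * q = 0"
  proof
    assume "M*q + s - inverse M * q = 0"
    then have s: "s = inverse M * q - M * q" by (simp add: algebra_simps)
    show "M*q + s = q * inverse M \<and> inverse M * r = r * M + s * c"
      unfolding s assms(2) by (simp add: algebra_simps)
  qed (simp add: algebra_simps)
  finally show ?thesis .
qed

lemma rho_s_mk: "rho_s M = mk M 1 0 (inverse M)" by (simp add: rho_s_def mk_def)
lemma rho_t_mk: "rho_t M x = mk M 0 (2 - M^2 - inverse (M^2) - x) (inverse M)" by (simp add: rho_t_def mk_def)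

lemma A_facts:
  fixes M x :: complex
  assumes M: "M \<noteq> 0"
  defines "c \<equiv> 2 - M^2 - inverse (M^2) - x" and "u \<equiv> M^2 + inverse (M^2) + x - 1"
    and "A \<equiv> rho_t M x ** matrix_inv (rho_s M) ** rho_t M x ** rho_s M ** matrix_inv (rho_t M x) ** rho_s M"
  shows "A$1$1*A$2$2 - A$1$2*A$2$1 = 1" "A$1$1 + A$2$2 = 2 + (-x*u^2)" "A$2$1 = c * A$1$2"
    "(M - inverse M)*A$1$2 + A$2$2 = 1 - x*u - x*u^2"
proof -
  have iS: "matrix_inv (rho_s M) = mk (inverse M) (-1) 0 M" unfolding rho_s_mk using M by (subst mk_inv) auto
  have iT: "matrix_inv (rho_t M x) = mk (inverse M) 0 (-c) M" unfolding rho_t_mk c_def using M by (subst mk_inv) auto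
  have Aeq: "A = mk M 0 c (inverse M) ** mk (inverse M) (-1) 0 M ** mk M 0 c (inverse M) ** mk M 1 0 (inverse M) ** mk (inverse M) 0 (-c) M ** mk M 1 0 (inverse M)"
    unfolding A_def iS iT unfolding rho_s_mk rho_t_mk c_def ..
  note A = Aeq[unfolded mk_mult]
  show "A$1$1*A$2$2 - A$1$2*A$2$1 = 1" unfolding A mk_nth using M by (simp add: field_simps) 
  show "A$1$1 + A$2$2 = 2 + (-x*u^2)" unfolding A mk_nth c_def u_def using M by (simp add: field_simps power2_eq_square) 
  show "A$2$1 = c * A$1$2" unfolding A mk_nth using M by (simp add: field_simps)
  show "(M - inverse M)*A$1$2 + A$2$2 = 1 - x*u - x*u^2" unfolding A mk_nth c_def u_def using M by (simp add: field_simps power2_eq_square)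
qed

lemma split1: "(\<Sum>i=0..2*(N::nat). h i) = (\<Sum>j\<le>N. h (2*j)) + (\<Sum>j<N. h (2*j+1))"
proof (induction N)
  case 0 then show ?case by simp
next
  case (Suc N)
  have e: "2 * Suc N = Suc (Suc (2*N))" by simp
  show ?case unfolding e sum.atLeast0_atMost_Suc Suc.IH
    by (simp add: sum.atMost_Suc sum.lessThan_Suc ac_simps)
qed

lemma split2: "(\<Sum>i=0..2*(N::nat)+1. h i) = (\<Sum>j\<le>N. h (2*j)) + (\<Sum>j\<le>N. h (2*j+1))"
proof -
  have "(\<Sum>i=0..2*N+1. h i) = (\<Sum>i=0..2*N. h i) + h (2*N+1)"
    by (simp add: sum.atLeast0_atMost_Suc)
  also have "\<dots> = (\<Sum>j\<le>N. h (2*j)) + (\<Sum>j\<le>N. h (2*j+1))"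
  proof -
    have "(\<Sum>j\<le>N. h (2*j+1)) = (\<Sum>j<N. h (2*j+1)) + h (2*N+1)"
      by (simp add: lessThan_Suc_atMost[symmetric])
    then show ?thesis unfolding split1 by (simp add: add.assoc)
  qed
  finally show ?thesis .
qed

lemma pw1: "(w::complex)^(2*j) * (-x)^j = (-x*w^2)^j"
  by (induction j) (simp_all add: algebra_simps power2_eq_square)
lemma pw3: "(w::complex)^(2*j+1) * (-x)^(j+1) = (-x*w) * (-x*w^2)^j"
  using pw1[of w j x] by (simp add: algebra_simps)
lemma pw4: "(-(w::complex))^(2*j) * (-x)^j = (-x*w^2)^j"
  using pw1[of "-w" j x] by simp
lemma pw5: "(-(w::complex))^(2*j+1) * (-x)^(j+1) = (x*w) * (-x*w^2)^j"
  using pw3[of "-w" j x] by simp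

lemma Dsq_less: "Dsq v k = (\<Sum>j<k. of_nat ((k+j) choose (2*j+1)) * v^j)"
  unfolding Dsq_def
  by (rule sum.mono_neutral_right) (auto simp: binomial_eq_0)

lemma riley_pos:
  fixes M x :: complex and k :: nat
  defines "u \<equiv> M^2 + inverse (M^2) + x - 1"
  shows "riley_mednykh (int k) x M = M^(4*k) * (Esq (-x*u^2) k - x*u*Dsq (-x*u^2) k)"
proof -
  let ?h = "\<lambda>i. of_nat (nat (int k + int (i div 2)) choose i) * M^(nat (4*int k))
          * (M^2 + inverse (M^2) + x - 1)^i * (- x)^((1 + i) div 2)"
  have "riley_mednykh (int k) x M = (\<Sum>i=0..2*k. ?h i)"
    unfolding riley_mednykh_def by (simp add: nat_mult_distrib)
  also have "\<dots> = (\<Sum>j\<le>k. ?h (2*j)) + (\<Sum>j<k. ?h (2*j+1))" by (rule split1)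
  also have "(\<Sum>j\<le>k. ?h (2*j)) = M^(4*k) * Esq (-x*u^2) k"
    unfolding Esq_def sum_distrib_left
  proof (rule sum.cong)
    fix j assume "j \<in> {..k}"
    have a: "nat (int k + int (2*j div 2)) = k + j" by simp
    have b: "nat (4*int k) = 4*k" by simp
    have "?h (2*j) = of_nat ((k+j) choose (2*j)) * M^(4*k) * (u^(2*j) * (-x)^j)"
      unfolding a b by (simp add: u_def)
    then show "?h (2*j) = M^(4*k) * (of_nat ((k+j) choose (2*j)) * (-x*u^2)^j)"
      unfolding pw1 by (simp add: ac_simps)
  qed simp
  also have "(\<Sum>j<k. ?h (2*j+1)) = M^(4*k) * (- x*u*Dsq (-x*u^2) k)"
    unfolding Dsq_less sum_distrib_left
  proof (rule sum.cong)
    fix j assume "j \<in> {..<k}"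
    have a: "nat (int k + int ((2*j+1) div 2)) = k + j" by simp
    have b: "nat (4*int k) = 4*k" by simp
    have "?h (2*j+1) = of_nat ((k+j) choose (2*j+1)) * M^(4*k) * (u^(2*j+1) * (-x)^(j+1))"
      unfolding a b by (simp add: u_def)
    then show "?h (2*j+1) = M^(4*k) * (- x*u*(of_nat ((k+j) choose (2*j+1)) * (-x*u^2)^j))"
      unfolding pw3 by (simp add: ac_simps)
  qed simp
  finally show ?thesis by (simp add: algebra_simps)
qed

lemma riley_neg:
  fixes M x :: complex and m :: nat
  assumes m: "1 \<le> m"
  defines "u \<equiv> M^2 + inverse (M^2) + x - 1"
  shows "riley_mednykh (- int m) x M = M^(4*m-2) * (Esq (-x*u^2) (m-1) + x*u*Dsq (-x*u^2) m)"
proof -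
  let ?h = "\<lambda>i. of_nat (nat (- (- int m) + (int i - 1) div 2) choose i)
          * M^(nat (-4*(- int m) - 2))
          * (- (M^2) - inverse (M^2) - x + 1)^i * (- x)^((1 + i) div 2)"
  have r: "nat (-2 * - int m - 1) = 2*(m-1)+1" using m by simp
  have Dm: "Dsq v m = (\<Sum>j\<le>m-1. of_nat ((m+j) choose (2*j+1)) * v^j)" for v
    by (rule Dsq_range) (use m in simp)
  have ueq: "- (M^2) - inverse (M^2) - x + 1 = - u" by (simp add: u_def)
  have "riley_mednykh (- int m) x M = (\<Sum>i=0..2*(m-1)+1. ?h i)"
    unfolding riley_mednykh_def r[symmetric] using m by simp
  also have "\<dots> = (\<Sum>j\<le>m-1. ?h (2*j)) + (\<Sum>j\<le>m-1. ?h (2*j+1))" by (rule split2)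
  also have "(\<Sum>j\<le>m-1. ?h (2*j)) = M^(4*m-2) * Esq (-x*u^2) (m-1)"
    unfolding Esq_def sum_distrib_left
  proof (rule sum.cong)
    fix j assume "j \<in> {..m-1}"
    have a: "nat (- (- int m) + (int (2*j) - 1) div 2) = m - 1 + j" using m by simp
    have b: "nat (-4*(- int m) - 2) = 4*m-2" using m by simp
    have "?h (2*j) = of_nat ((m-1+j) choose (2*j)) * M^(4*m-2) * ((-u)^(2*j) * (-x)^j)"
      unfolding a b ueq by simp
    then show "?h (2*j) = M^(4*m-2) * (of_nat ((m-1+j) choose (2*j)) * (-x*u^2)^j)"
      unfolding pw4 by (simp add: ac_simps)
  qed simp
  also have "(\<Sum>j\<le>m-1. ?h (2*j+1)) = M^(4*m-2) * (x*u*Dsq (-x*u^2) m)"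
    unfolding Dm sum_distrib_left
  proof (rule sum.cong)
    fix j assume "j \<in> {..m-1}"
    have a: "nat (- (- int m) + (int (2*j+1) - 1) div 2) = m + j" using m by simp
    have b: "nat (-4*(- int m) - 2) = 4*m-2" using m by simp
    have "?h (2*j+1) = of_nat ((m+j) choose (2*j+1)) * M^(4*m-2) * ((-u)^(2*j+1) * (-x)^(j+1))"
      unfolding a b ueq by simp
    then show "?h (2*j+1) = M^(4*m-2) * (x*u*(of_nat ((m+j) choose (2*j+1)) * (-x*u^2)^j))"
      unfolding pw5 by (simp add: ac_simps)
  qed simp
  finally show ?thesis by (simp add: algebra_simps)
qed

theorem lemma1:
  fixes n :: int and M x :: complex
  assumes "M \<noteq> 0"
  shows "defines_rep n (rho_s M) (rho_t M x) \<longleftrightarrow> riley_mednykh n x M = 0"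
proof -
  note M = assms
  define c where "c = 2 - M^2 - inverse (M^2) - x"
  define u where "u = M^2 + inverse (M^2) + x - 1"
  define v where "v = -x*u^2"
  define A where "A = rho_t M x ** matrix_inv (rho_s M) ** rho_t M x ** rho_s M ** matrix_inv (rho_t M x) ** rho_s M"
  define a11 where "a11 = A$1$1"
  define a12 where "a12 = A$1$2"
  define a21 where "a21 = A$2$1"
  define a22 where "a22 = A$2$2"
  have F: "a11*a22 - a12*a21 = 1" "a11 + a22 = 2 + v" "a21 = c * a12"
    "(M - inverse M)*a12 + a22 = 1 - x*u - x*u^2"
    using A_facts[OF M, of x] unfolding a11_def a12_def a21_def a22_def A_def c_def u_def v_def by auto
  have Amk: "A = mk a11 a12 a21 a22" unfolding a11_def a12_def a21_def a22_def by (rule mk_all)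
  have Ainv: "invertible A" unfolding Amk using F(1) by (rule mk_inv)
  have iA: "matrix_inv A = mk a22 (-a12) (-a21) a11" unfolding Amk using F(1) by (rule mk_inv)
  have iAinv: "invertible (matrix_inv A)" unfolding iA using F(1) by (intro mk_inv) (simp add: algebra_simps)
  have Sinv: "invertible (rho_s M)" unfolding rho_s_mk using M by (intro mk_inv) simp
  have Tinv: "invertible (rho_t M x)" unfolding rho_t_mk using M by (intro mk_inv) simp
  have W: "word_w n (rho_s M) (rho_t M x) = mpow_int A n" unfolding word_w_def A_def ..
  have Drec: "Dsq v (Suc (Suc k)) = (a11 + a22) * Dsq v (Suc k) - Dsq v k" for k
    unfolding F(2) by (rule Dsq_rec)
  have Drec': "Dsq v (Suc (Suc k)) = (a22 + a11) * Dsq v (Suc k) - Dsq v k" for k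
    using Drec[of k] by (simp add: add.commute)
  have Dstep: "Dsq v (Suc k) = (2 + v) * Dsq v k - (if k = 0 then -1 else Dsq v (k-1))" for k
    by (cases k) (simp_all add: Dsq_0 Dsq_1[unfolded One_nat_def] Dsq_rec)
  show ?thesis
  proof (cases "0 \<le> n")
    case True
    then obtain k where k: "n = int k" by (metis nonneg_eq_int)
    define t where "t = (if k = 0 then -1 else Dsq v (k-1))"
    define D where "D = Dsq v k"
    have Wk: "mpow_int A n = mk (D * a11 - t) (D * a12) (D * a21) (D * a22 - t)"
      unfolding mpow_int_def k D_def t_def using pow_mk[OF F(1) Dsq_0 Dsq_1[unfolded One_nat_def] Drec, of k]
      by (simp add: Amk)
    have Winv: "invertible (mpow_int A n)" unfolding mpow_int_def k using invertible_pow[OF Ainv] by simp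
    have "defines_rep n (rho_s M) (rho_t M x) \<longleftrightarrow> rho_s M ** mpow_int A n = mpow_int A n ** rho_t M x"
      unfolding defines_rep_def W by (rule rel_iff[OF Winv Tinv])
    also have "\<dots> \<longleftrightarrow> M * (D*a12) + (D*a22 - t) - inverse M * (D*a12) = 0"
      unfolding Wk rho_s_mk rho_t_mk by (rule key[OF M]) (simp add: F(3) c_def)
    also have "M * (D*a12) + (D*a22 - t) - inverse M * (D*a12) = D * ((M - inverse M)*a12 + a22) - t"
      by (simp add: algebra_simps)
    also have "\<dots> = D * (1 - x*u - x*u^2) - t" unfolding F(4) ..
    also have "\<dots> = Esq v k - x*u*Dsq v k"
    proof -
      have "Esq v k - x*u*Dsq v k = D*(1 + v - x*u) - t"
        using Dstep[of k] unfolding Esq_Dsq D_def t_def by (simp add: algebra_simps)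
      then show ?thesis unfolding v_def by (simp add: algebra_simps)
    qed
    also have "(\<dots> = 0) \<longleftrightarrow> riley_mednykh n x M = 0"
      unfolding k riley_pos u_def[symmetric] v_def[symmetric] using M by simp
    finally show ?thesis .
  next
    case False
    define m where "m = nat (-n)"
    have m: "n = - int m" "1 \<le> m" using False unfolding m_def by auto
    define t where "t = Dsq v (m-1)"
    define D where "D = Dsq v m"
    have Wm: "mpow_int A n = mk (D * a22 - t) (D * (-a12)) (D * (-a21)) (D * a11 - t)"
      unfolding mpow_int_def m(1) D_def t_def iA
      using pow_mk[where a=a22 and b="-a12" and c="-a21" and d=a11 and s="Dsq v" and k=m, OF _ Dsq_0 Dsq_1[unfolded One_nat_def] Drec'] F(1) m(2)
      by (simp add: algebra_simps)
    have Winv: "invertible (mpow_int A n)" unfolding mpow_int_def m(1) using invertible_pow[OF iAinv] m(2) by simp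
    have "defines_rep n (rho_s M) (rho_t M x) \<longleftrightarrow> rho_s M ** mpow_int A n = mpow_int A n ** rho_t M x"
      unfolding defines_rep_def W by (rule rel_iff[OF Winv Tinv])
    also have "\<dots> \<longleftrightarrow> M * (D*(-a12)) + (D*a11 - t) - inverse M * (D*(-a12)) = 0"
      unfolding Wm rho_s_mk rho_t_mk by (rule key[OF M]) (simp add: F(3) c_def)
    also have "M * (D*(-a12)) + (D*a11 - t) - inverse M * (D*(-a12)) = D * ((a11 + a22) - ((M - inverse M)*a12 + a22)) - t"
      by (simp add: algebra_simps)
    also have "\<dots> = Esq v (m-1) + x*u*Dsq v m"
      unfolding F(2) F(4) Esq_Dsq D_def t_def v_def using m(2) by (simp add: algebra_simps)
    also have "(\<dots> = 0) \<longleftrightarrow> riley_mednykh n x M = 0"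
      unfolding m(1) riley_neg[OF m(2)] u_def[symmetric] v_def[symmetric] using M by simp
    finally show ?thesis .
  qed
qed

end
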